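(* There exist unitaries $W_0, W_1, \dots, W_5$ acting on four qubits (three ancilla qubits and one target qubit), all independent of $U$, with the following property. For every $U\in SU(2)$ define $$C_{\mathrm{V}}(U) = W_5\,(I_{\mathrm{anc}}\otimes U)\,W_4\,(I_{\mathrm{anc}}\otimes U)\,W_3\,(I_{\mathrm{anc}}\otimes U)\,W_2\,(I_{\mathrm{anc}}\otimes U)\,W_1\,(I_{\mathrm{anc}}\otimes U)\,W_0,$$ so that $U$ is applied exactly 5 times to the target qubit. Then for every $U\in SU(2)$ and every single-qubit state $|\psi\rangle$, $$C_{\mathrm{V}}(U)\,|000\rangle\otimes|\psi\rangle = |000\rangle\otimes U^{-1}|\psi\rangle .$$ That is, $U^{-1}$ is implemented exactly, and all three ancilla qubits are returned to $|000\rangle$.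
   Context: All systems are qubits ($\mathbb{C}^2$). $I_{\mathrm{anc}}$ denotes the identity on the three ancilla qubits. $SU(2)$ denotes the $2\times2$ unitary matrices with determinant $1$. For a general $U\in U(2)$, the identity holds up to a global phase. *)

theory Defs
  imports "HOL-Analysis.Analysis"
begin

type_synonym qubit = "complex ^ 2"
type_synonym anc_idx = "2 \<times> 2 \<times> 2"
type_synonym four_idx = "anc_idx \<times> 2"

definition cadjoint :: "complex ^ 'n ^ 'm \<Rightarrow> complex ^ 'm ^ 'n" where
  "cadjoint A = (\<chi> i j. cnj (A $ j $ i))"

definition cunitary :: "complex ^ 'n ^ 'n \<Rightarrow> bool" where
  "cunitary A \<longleftrightarrow> A ** cadjoint A = mat 1 \<and> cadjoint A ** A = mat 1"

definition SU2 :: "(complex ^ 2 ^ 2) set" where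
  "SU2 = {U. cunitary U \<and> det U = 1}"

definition kron :: "'a::times ^ 'm ^ 'n \<Rightarrow> 'a ^ 'p ^ 'q \<Rightarrow> 'a ^ ('m \<times> 'p) ^ ('n \<times> 'q)" where
  "kron A B = (\<chi> r c. A $ fst r $ fst c * B $ snd r $ snd c)"

definition vkron :: "'a::times ^ 'n \<Rightarrow> 'a ^ 'm \<Rightarrow> 'a ^ ('n \<times> 'm)" where
  "vkron x y = (\<chi> i. x $ fst i * y $ snd i)"

definition ket000 :: "complex ^ anc_idx" where
  "ket000 = axis (0, 0, 0) 1"

definition anc_id_kron :: "complex ^ 2 ^ 2 \<Rightarrow> complex ^ four_idx ^ four_idx" where
  "anc_id_kron U = kron (mat 1 :: complex ^ anc_idx ^ anc_idx) U"

end

theory Submission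
  imports Defs
begin


lemma two_eq_zero_2: "(2::2) = 0" by simp

lemma forall_2': "(\<forall>i::2. P i) \<longleftrightarrow> P 0 \<and> P 1"
  by (metis exhaust_2 two_eq_zero_2)

definition b2 :: "2 \<Rightarrow> nat" where "b2 x = (if x = 0 then 0 else 1)"

lemma b2_simps [simp]: "b2 0 = 0" "b2 1 = 1"
  by (auto simp: b2_def)

definition enc :: "four_idx \<Rightarrow> nat" where
  "enc i = 8 * b2 (fst (fst i)) + 4 * b2 (fst (snd (fst i))) + 2 * b2 (snd (snd (fst i))) + b2 (snd i)"

lemma forall_four: "(\<forall>i::four_idx. P i) \<longleftrightarrow>
  P ((0,0,0),0) \<and> P ((0,0,0),1) \<and> P ((0,0,1),0) \<and> P ((0,0,1),1) \<and>
  P ((0,1,0),0) \<and> P ((0,1,0),1) \<and> P ((0,1,1),0) \<and> P ((0,1,1),1) \<and>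
  P ((1,0,0),0) \<and> P ((1,0,0),1) \<and> P ((1,0,1),0) \<and> P ((1,0,1),1) \<and>
  P ((1,1,0),0) \<and> P ((1,1,0),1) \<and> P ((1,1,1),0) \<and> P ((1,1,1),1)"
  by (simp add: split_paired_All forall_2' conj_ac)

lemma enc_lt: "enc i < 16"
  by (simp add: enc_def b2_def)

lemma inj_enc: "inj enc"
  unfolding inj_def forall_four by (simp add: enc_def)

lemma card_four: "CARD(four_idx) = 16"
  by simp

lemma enc_image: "enc ` UNIV = {..<16}"
proof -
  have sub: "enc ` UNIV \<subseteq> {..<16}" using enc_lt by auto
  have "card (enc ` UNIV) = 16" using inj_enc card_four by (simp add: card_image)
  then show ?thesis using sub by (simp add: card_subset_eq)
qed

lemma bij_enc: "bij_betw enc UNIV {..<16}"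
  using inj_enc enc_image by (simp add: bij_betw_def)

lemma sum_enc: "(\<Sum>j\<in>UNIV. f (enc j)) = (\<Sum>k<16. f k)"
  using sum.reindex_bij_betw[OF bij_enc, of f] by simp

definition mk_vec :: "complex list \<Rightarrow> complex ^ four_idx" where
  "mk_vec L = (\<chi> i. L ! enc i)"

definition mk_mat :: "complex list list \<Rightarrow> complex ^ four_idx ^ four_idx" where
  "mk_mat M = (\<chi> i j. M ! enc i ! enc j)"

definition dot :: "complex list \<Rightarrow> complex list \<Rightarrow> complex" where
  "dot a b = sum_list (map2 (*) a b)"

lemma dot_sum: "length a = n \<Longrightarrow> length b = n \<Longrightarrow> dot a b = (\<Sum>k<n. a ! k * b ! k)"
proof (induction a arbitrary: b n)
  case Nil then show ?case by (simp add: dot_def)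
next
  case (Cons x xs)
  then obtain y ys where b: "b = y # ys" by (cases b) auto
  from Cons have "n = Suc (length xs)" by simp
  with Cons b show ?case
    by (simp del: sum.lessThan_Suc add: dot_def sum.lessThan_Suc_shift)
qed

lemma dot_simps [simp]: "dot [] [] = 0" "dot (x # xs) (y # ys) = x * y + dot xs ys"
  by (simp_all add: dot_def)

definition mvl :: "complex list list \<Rightarrow> complex list \<Rightarrow> complex list" where
  "mvl M v = map (\<lambda>row. dot row v) M"

definition good_mat :: "complex list list \<Rightarrow> bool" where
  "good_mat M \<longleftrightarrow> length M = 16 \<and> (\<forall>row \<in> set M. length row = 16)"

lemma mk_mat_mult_vec:
  assumes "good_mat M" "length v = 16"
  shows "mk_mat M *v mk_vec v = mk_vec (mvl M v)"
proof -
  have "(mk_mat M *v mk_vec v) $ i = mk_vec (mvl M v) $ i" for i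
  proof -
    have "(mk_mat M *v mk_vec v) $ i = (\<Sum>j\<in>UNIV. M ! enc i ! enc j * v ! enc j)"
      by (simp add: matrix_vector_mult_def mk_mat_def mk_vec_def)
    also have "\<dots> = (\<Sum>k<16. M ! enc i ! k * v ! k)"
      by (rule sum_enc)
    also have "\<dots> = dot (M ! enc i) v"
      using assms enc_lt[of i] by (subst dot_sum[of _ 16]) (auto simp: good_mat_def)
    also have "\<dots> = mk_vec (mvl M v) $ i"
      using assms enc_lt[of i] by (simp add: mk_vec_def mvl_def good_mat_def)
    finally show ?thesis .
  qed
  then show ?thesis by (simp add: vec_eq_iff)
qed

lemma length_mvl [simp]: "length (mvl M v) = length M"
  by (simp add: mvl_def)

lemma mvl_simps [simp]: "mvl [] v = []" "mvl (r # rs) v = dot r v # mvl rs v"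
  by (simp_all add: mvl_def)



definition r3 :: complex where "r3 = complex_of_real (sqrt 3)"
definition r2 :: complex where "r2 = complex_of_real (sqrt 2)"
lemma r3_sq: "r3 * r3 = 3"
  unfolding r3_def by (simp flip: of_real_mult)
lemma r2_sq: "r2 * r2 = 2"
  unfolding r2_def by (simp flip: of_real_mult)
lemma r3_sq': "r3 * (r3 * z) = 3 * z"
  by (simp add: r3_sq flip: mult.assoc)
lemma r2_sq': "r2 * (r2 * z) = 2 * z"
  by (simp add: r2_sq flip: mult.assoc)

definition UL :: "complex \<Rightarrow> complex \<Rightarrow> complex \<Rightarrow> complex \<Rightarrow> complex list list" where
  "UL p q r s = [[p, q, 0, 0, 0, 0, 0, 0, 0, 0, 0, 0, 0, 0, 0, 0],
  [r, s, 0, 0, 0, 0, 0, 0, 0, 0, 0, 0, 0, 0, 0, 0],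
  [0, 0, p, q, 0, 0, 0, 0, 0, 0, 0, 0, 0, 0, 0, 0],
  [0, 0, r, s, 0, 0, 0, 0, 0, 0, 0, 0, 0, 0, 0, 0],
  [0, 0, 0, 0, p, q, 0, 0, 0, 0, 0, 0, 0, 0, 0, 0],
  [0, 0, 0, 0, r, s, 0, 0, 0, 0, 0, 0, 0, 0, 0, 0],
  [0, 0, 0, 0, 0, 0, p, q, 0, 0, 0, 0, 0, 0, 0, 0],
  [0, 0, 0, 0, 0, 0, r, s, 0, 0, 0, 0, 0, 0, 0, 0],
  [0, 0, 0, 0, 0, 0, 0, 0, p, q, 0, 0, 0, 0, 0, 0],
  [0, 0, 0, 0, 0, 0, 0, 0, r, s, 0, 0, 0, 0, 0, 0],
  [0, 0, 0, 0, 0, 0, 0, 0, 0, 0, p, q, 0, 0, 0, 0],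
  [0, 0, 0, 0, 0, 0, 0, 0, 0, 0, r, s, 0, 0, 0, 0],
  [0, 0, 0, 0, 0, 0, 0, 0, 0, 0, 0, 0, p, q, 0, 0],
  [0, 0, 0, 0, 0, 0, 0, 0, 0, 0, 0, 0, r, s, 0, 0],
  [0, 0, 0, 0, 0, 0, 0, 0, 0, 0, 0, 0, 0, 0, p, q],
  [0, 0, 0, 0, 0, 0, 0, 0, 0, 0, 0, 0, 0, 0, r, s]]"
definition W0l :: "complex list list" where
  "W0l = [[0, 0, 0, 0, 0, 0, 0, 0, 0, 1, 0, 0, 0, 0, 0, 0],
  [(r2/2), 0, 0, 0, (r2/2), 0, 0, 0, 0, 0, 0, 0, 0, 0, 0, 0],
  [0, 0, 1, 0, 0, 0, 0, 0, 0, 0, 0, 0, 0, 0, 0, 0],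
  [0, 0, 0, 1, 0, 0, 0, 0, 0, 0, 0, 0, 0, 0, 0, 0],
  [(-(r2/2)), 0, 0, 0, (r2/2), 0, 0, 0, 0, 0, 0, 0, 0, 0, 0, 0],
  [0, 0, 0, 0, 0, 1, 0, 0, 0, 0, 0, 0, 0, 0, 0, 0],
  [0, 0, 0, 0, 0, 0, 1, 0, 0, 0, 0, 0, 0, 0, 0, 0],
  [0, 0, 0, 0, 0, 0, 0, 1, 0, 0, 0, 0, 0, 0, 0, 0],
  [0, 0, 0, 0, 0, 0, 0, 0, 1, 0, 0, 0, 0, 0, 0, 0],
  [0, (r2/2), 0, 0, 0, 0, 0, 0, 0, 0, 0, 0, (r2/2), 0, 0, 0],
  [0, 0, 0, 0, 0, 0, 0, 0, 0, 0, 1, 0, 0, 0, 0, 0],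
  [0, 0, 0, 0, 0, 0, 0, 0, 0, 0, 0, 1, 0, 0, 0, 0],
  [0, (-(r2/2)), 0, 0, 0, 0, 0, 0, 0, 0, 0, 0, (r2/2), 0, 0, 0],
  [0, 0, 0, 0, 0, 0, 0, 0, 0, 0, 0, 0, 0, 1, 0, 0],
  [0, 0, 0, 0, 0, 0, 0, 0, 0, 0, 0, 0, 0, 0, 1, 0],
  [0, 0, 0, 0, 0, 0, 0, 0, 0, 0, 0, 0, 0, 0, 0, 1]]"

definition W5l :: "complex list list" where
  "W5l = [[0, (r2/2), 0, 0, (-(r2/2)), 0, 0, 0, 0, 0, 0, 0, 0, 0, 0, 0],
  [0, 0, 0, 0, 0, 0, 0, 0, 0, (r2/2), 0, 0, (-(r2/2)), 0, 0, 0],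
  [0, 0, 1, 0, 0, 0, 0, 0, 0, 0, 0, 0, 0, 0, 0, 0],
  [0, 0, 0, 1, 0, 0, 0, 0, 0, 0, 0, 0, 0, 0, 0, 0],
  [0, (r2/2), 0, 0, (r2/2), 0, 0, 0, 0, 0, 0, 0, 0, 0, 0, 0],
  [0, 0, 0, 0, 0, 1, 0, 0, 0, 0, 0, 0, 0, 0, 0, 0],
  [0, 0, 0, 0, 0, 0, 1, 0, 0, 0, 0, 0, 0, 0, 0, 0],
  [0, 0, 0, 0, 0, 0, 0, 1, 0, 0, 0, 0, 0, 0, 0, 0],
  [0, 0, 0, 0, 0, 0, 0, 0, 1, 0, 0, 0, 0, 0, 0, 0],
  [1, 0, 0, 0, 0, 0, 0, 0, 0, 0, 0, 0, 0, 0, 0, 0],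
  [0, 0, 0, 0, 0, 0, 0, 0, 0, 0, 1, 0, 0, 0, 0, 0],
  [0, 0, 0, 0, 0, 0, 0, 0, 0, 0, 0, 1, 0, 0, 0, 0],
  [0, 0, 0, 0, 0, 0, 0, 0, 0, (r2/2), 0, 0, (r2/2), 0, 0, 0],
  [0, 0, 0, 0, 0, 0, 0, 0, 0, 0, 0, 0, 0, 1, 0, 0],
  [0, 0, 0, 0, 0, 0, 0, 0, 0, 0, 0, 0, 0, 0, 1, 0],
  [0, 0, 0, 0, 0, 0, 0, 0, 0, 0, 0, 0, 0, 0, 0, 1]]"

definition W1l :: "complex list list" where
  "W1l = [[(-1), 0, 0, 0, 0, 0, 0, 0, 0, 0, 0, 0, 0, 0, 0, 0],
  [0, 0, 0, 0, (-1), 0, 0, 0, 0, 0, 0, 0, 0, 0, 0, 0],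
  [0, 0, (1), 0, 0, 0, 0, 0, 0, 0, 0, 0, 0, 0, 0, 0],
  [0, (1/3 * r3), 0, (1/3), 0, 0, (1/3), 0, (-1/3 * r3), 0, (1/3), 0, 0, 0, 0, 0],
  [0, (-1/2), 0, (-1/6 * r3), 0, 0, (1/3 * r3), 0, (-1/2), 0, (-1/6 * r3), 0, 0, 0, 0, 0],
  [0, 0, 0, 0, 0, (-1/2), 0, (1/6 * r3), 0, 0, 0, (-1/3 * r3), (-1/2), 0, (1/6 * r3), 0],
  [0, (-1/6 * r3), 0, (-1/6), 0, 0, (1/3), 0, (1/6 * r3), 0, (5/6), 0, 0, 0, 0, 0],
  [0, 0, 0, 0, 0, (1/6 * r3), 0, (-1/6), 0, 0, 0, (1/3), (-1/6 * r3), 0, (5/6), 0],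
  [0, (-1/2), 0, (1/6 * r3), 0, 0, (-1/3 * r3), 0, (-1/2), 0, (1/6 * r3), 0, 0, 0, 0, 0],
  [0, 0, 0, 0, 0, (-1/2), 0, (-1/6 * r3), 0, 0, 0, (1/3 * r3), (-1/2), 0, (-1/6 * r3), 0],
  [0, (-1/6 * r3), 0, (5/6), 0, 0, (1/3), 0, (1/6 * r3), 0, (-1/6), 0, 0, 0, 0, 0],
  [0, 0, 0, 0, 0, (1/6 * r3), 0, (5/6), 0, 0, 0, (1/3), (-1/6 * r3), 0, (-1/6), 0],
  [0, 0, 0, 0, 0, 0, 0, 0, 0, (-1), 0, 0, 0, 0, 0, 0],
  [0, 0, 0, 0, 0, 0, 0, 0, 0, 0, 0, 0, 0, (-1), 0, 0],
  [0, 0, 0, 0, 0, (-1/3 * r3), 0, (1/3), 0, 0, 0, (1/3), (1/3 * r3), 0, (1/3), 0],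
  [0, 0, 0, 0, 0, 0, 0, 0, 0, 0, 0, 0, 0, 0, 0, (1)]]"

definition W2l :: "complex list list" where
  "W2l = [[(1), 0, 0, 0, 0, 0, 0, 0, 0, 0, 0, 0, 0, 0, 0, 0],
  [0, (1/3), 0, 0, (1/3 + -1/3 * r3), 0, 0, 0, (1/3 + 1/3 * r3), 0, 0, 0, 0, 0, 0, 0],
  [0, 0, (1), 0, 0, 0, 0, 0, 0, 0, 0, 0, 0, 0, 0, 0],
  [0, (-1/3 * r3), 0, 0, (1/6 * r3), 0, (1/2), 0, (1/6 * r3), 0, (1/2), 0, 0, 0, 0, 0],
  [0, (1/3 + 1/6 * r3), 0, (-1/2), (1/3 + 1/12 * r3), 0, (1/4), 0, (1/3 + -1/4 * r3), 0, (1/4), 0, 0, 0, 0, 0],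
  [0, 0, 0, 0, 0, (1/3 + -1/12 * r3), 0, (-1/4), 0, (1/3 + 1/4 * r3), 0, (-1/4), (1/3 + -1/6 * r3), 0, (1/2), 0],
  [0, (1/6 * r3), 0, (1/2), (-1/12 * r3), 0, (3/4), 0, (-1/12 * r3), 0, (-1/4), 0, 0, 0, 0, 0],
  [0, 0, 0, 0, 0, (-1/12 * r3), 0, (3/4), 0, (-1/12 * r3), 0, (-1/4), (1/6 * r3), 0, (1/2), 0],
  [0, (1/3 + -1/6 * r3), 0, (1/2), (1/3 + 1/4 * r3), 0, (-1/4), 0, (1/3 + -1/12 * r3), 0, (-1/4), 0, 0, 0, 0, 0],
  [0, 0, 0, 0, 0, (1/3 + -1/4 * r3), 0, (1/4), 0, (1/3 + 1/12 * r3), 0, (1/4), (1/3 + 1/6 * r3), 0, (-1/2), 0],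
  [0, (1/6 * r3), 0, (1/2), (-1/12 * r3), 0, (-1/4), 0, (-1/12 * r3), 0, (3/4), 0, 0, 0, 0, 0],
  [0, 0, 0, 0, 0, (-1/12 * r3), 0, (-1/4), 0, (-1/12 * r3), 0, (3/4), (1/6 * r3), 0, (1/2), 0],
  [0, 0, 0, 0, 0, (1/3 + 1/3 * r3), 0, 0, 0, (1/3 + -1/3 * r3), 0, 0, (1/3), 0, 0, 0],
  [0, 0, 0, 0, 0, 0, 0, 0, 0, 0, 0, 0, 0, (1), 0, 0],
  [0, 0, 0, 0, 0, (1/6 * r3), 0, (1/2), 0, (1/6 * r3), 0, (1/2), (-1/3 * r3), 0, 0, 0],
  [0, 0, 0, 0, 0, 0, 0, 0, 0, 0, 0, 0, 0, 0, 0, (1)]]"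

definition W3l :: "complex list list" where
  "W3l = [[(1), 0, 0, 0, 0, 0, 0, 0, 0, 0, 0, 0, 0, 0, 0, 0],
  [0, (1/3), 0, (-1/3 * r3), (1/3 + -1/6 * r3), 0, (1/6 * r3), 0, (1/3 + 1/6 * r3), 0, (1/6 * r3), 0, 0, 0, 0, 0],
  [0, 0, (1), 0, 0, 0, 0, 0, 0, 0, 0, 0, 0, 0, 0, 0],
  [0, 0, 0, 0, (1/2), 0, (1/2), 0, (-1/2), 0, (1/2), 0, 0, 0, 0, 0],
  [0, (1/3), 0, (1/6 * r3), (1/3 + 1/12 * r3), 0, (1/2 + -1/12 * r3), 0, (1/3 + -1/12 * r3), 0, (-1/2 + -1/12 * r3), 0, 0, 0, 0, 0],
  [0, 0, 0, 0, 0, (1/3 + -1/12 * r3), 0, (1/2 + -1/12 * r3), 0, (1/3 + 1/12 * r3), 0, (-1/2 + -1/12 * r3), (1/3), 0, (1/6 * r3), 0],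
  [0, (-1/3 * r3), 0, (1/2), (-1/4 + 1/6 * r3), 0, (1/4), 0, (1/4 + 1/6 * r3), 0, (1/4), 0, 0, 0, 0, 0],
  [0, 0, 0, 0, 0, (1/4 + -1/6 * r3), 0, (1/4), 0, (-1/4 + -1/6 * r3), 0, (1/4), (1/3 * r3), 0, (1/2), 0],
  [0, (1/3), 0, (1/6 * r3), (1/3 + 1/12 * r3), 0, (-1/2 + -1/12 * r3), 0, (1/3 + -1/12 * r3), 0, (1/2 + -1/12 * r3), 0, 0, 0, 0, 0],
  [0, 0, 0, 0, 0, (1/3 + -1/12 * r3), 0, (-1/2 + -1/12 * r3), 0, (1/3 + 1/12 * r3), 0, (1/2 + -1/12 * r3), (1/3), 0, (1/6 * r3), 0],
  [0, (1/3 * r3), 0, (1/2), (-1/4 + -1/6 * r3), 0, (1/4), 0, (1/4 + -1/6 * r3), 0, (1/4), 0, 0, 0, 0, 0],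
  [0, 0, 0, 0, 0, (1/4 + 1/6 * r3), 0, (1/4), 0, (-1/4 + 1/6 * r3), 0, (1/4), (-1/3 * r3), 0, (1/2), 0],
  [0, 0, 0, 0, 0, (1/3 + 1/6 * r3), 0, (1/6 * r3), 0, (1/3 + -1/6 * r3), 0, (1/6 * r3), (1/3), 0, (-1/3 * r3), 0],
  [0, 0, 0, 0, 0, 0, 0, 0, 0, 0, 0, 0, 0, (1), 0, 0],
  [0, 0, 0, 0, 0, (-1/2), 0, (1/2), 0, (1/2), 0, (1/2), 0, 0, 0, 0],
  [0, 0, 0, 0, 0, 0, 0, 0, 0, 0, 0, 0, 0, 0, 0, (1)]]"

definition W4l :: "complex list list" where
  "W4l = [[(-1), 0, 0, 0, 0, 0, 0, 0, 0, 0, 0, 0, 0, 0, 0, 0],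
  [0, 0, 0, (1/3 * r3), (-1/2), 0, (-1/6 * r3), 0, (-1/2), 0, (-1/6 * r3), 0, 0, 0, 0, 0],
  [0, 0, (1), 0, 0, 0, 0, 0, 0, 0, 0, 0, 0, 0, 0, 0],
  [0, 0, 0, (1/3), (-1/6 * r3), 0, (-1/6), 0, (1/6 * r3), 0, (5/6), 0, 0, 0, 0, 0],
  [0, (-1), 0, 0, 0, 0, 0, 0, 0, 0, 0, 0, 0, 0, 0, 0],
  [0, 0, 0, 0, 0, (-1/2), 0, (1/6 * r3), 0, (-1/2), 0, (1/6 * r3), 0, 0, (-1/3 * r3), 0],
  [0, 0, 0, (1/3), (1/3 * r3), 0, (1/3), 0, (-1/3 * r3), 0, (1/3), 0, 0, 0, 0, 0],
  [0, 0, 0, 0, 0, (1/6 * r3), 0, (-1/6), 0, (-1/6 * r3), 0, (5/6), 0, 0, (1/3), 0],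
  [0, 0, 0, (-1/3 * r3), (-1/2), 0, (1/6 * r3), 0, (-1/2), 0, (1/6 * r3), 0, 0, 0, 0, 0],
  [0, 0, 0, 0, 0, 0, 0, 0, 0, 0, 0, 0, (-1), 0, 0, 0],
  [0, 0, 0, (1/3), (-1/6 * r3), 0, (5/6), 0, (1/6 * r3), 0, (-1/6), 0, 0, 0, 0, 0],
  [0, 0, 0, 0, 0, (-1/3 * r3), 0, (1/3), 0, (1/3 * r3), 0, (1/3), 0, 0, (1/3), 0],
  [0, 0, 0, 0, 0, (-1/2), 0, (-1/6 * r3), 0, (-1/2), 0, (-1/6 * r3), 0, 0, (1/3 * r3), 0],
  [0, 0, 0, 0, 0, 0, 0, 0, 0, 0, 0, 0, 0, (-1), 0, 0],
  [0, 0, 0, 0, 0, (1/6 * r3), 0, (5/6), 0, (-1/6 * r3), 0, (-1/6), 0, 0, (1/3), 0],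
  [0, 0, 0, 0, 0, 0, 0, 0, 0, 0, 0, 0, 0, 0, 0, (1)]]"

definition S0 :: "complex \<Rightarrow> complex \<Rightarrow> complex \<Rightarrow> complex \<Rightarrow> complex \<Rightarrow> complex \<Rightarrow> complex list" where
  "S0 p q r s x y = [0, r2/2 * ((1) * x), 0, 0, r2/2 * ((-1) * x), 0, 0, 0, 0, r2/2 * ((1) * y), 0, 0, r2/2 * ((-1) * y), 0, 0, 0]"

definition S1 :: "complex \<Rightarrow> complex \<Rightarrow> complex \<Rightarrow> complex \<Rightarrow> complex \<Rightarrow> complex \<Rightarrow> complex list" where
  "S1 p q r s x y = [r2/2 * ((1) * q * x), r2/2 * ((1) * s * x), 0, 0, r2/2 * ((-1) * p * x), r2/2 * ((-1) * r * x), 0, 0, r2/2 * ((1) * q * y), r2/2 * ((1) * s * y), 0, 0, r2/2 * ((-1) * p * y), r2/2 * ((-1) * r * y), 0, 0]"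

definition S2 :: "complex \<Rightarrow> complex \<Rightarrow> complex \<Rightarrow> complex \<Rightarrow> complex \<Rightarrow> complex \<Rightarrow> complex list" where
  "S2 p q r s x y = [r2/2 * ((-1) * q * x), r2/2 * ((1) * p * x), 0, r2/2 * ((1/3 * r3) * s * x + (-1/3 * r3) * q * y), r2/2 * ((-1/2) * s * x + (-1/2) * q * y), r2/2 * ((1/2) * r * x + (1/2) * p * y), r2/2 * ((-1/6 * r3) * s * x + (1/6 * r3) * q * y), r2/2 * ((-1/6 * r3) * r * x + (1/6 * r3) * p * y), r2/2 * ((-1/2) * s * x + (-1/2) * q * y), r2/2 * ((1/2) * r * x + (1/2) * p * y), r2/2 * ((-1/6 * r3) * s * x + (1/6 * r3) * q * y), r2/2 * ((-1/6 * r3) * r * x + (1/6 * r3) * p * y), r2/2 * ((-1) * s * y), r2/2 * ((1) * r * y), r2/2 * ((1/3 * r3) * r * x + (-1/3 * r3) * p * y), 0]"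

definition S3 :: "complex \<Rightarrow> complex \<Rightarrow> complex \<Rightarrow> complex \<Rightarrow> complex \<Rightarrow> complex \<Rightarrow> complex list" where
  "S3 p q r s x y = [0, r2/2 * ((-1) * q * r * x + (1) * p * s * x), r2/2 * ((1/3 * r3) * q * s * x + (-1/3 * r3) * q * q * y), r2/2 * ((1/3 * r3) * s * s * x + (-1/3 * r3) * q * s * y), r2/2 * ((1/2) * q * r * x + (-1/2) * p * s * x), r2/2 * ((-1/2) * q * r * y + (1/2) * p * s * y), r2/2 * ((-1/6 * r3) * q * r * x + (-1/6 * r3) * p * s * x + (1/3 * r3) * p * q * y), r2/2 * ((-1/3 * r3) * r * s * x + (1/6 * r3) * q * r * y + (1/6 * r3) * p * s * y), r2/2 * ((1/2) * q * r * x + (-1/2) * p * s * x), r2/2 * ((-1/2) * q * r * y + (1/2) * p * s * y), r2/2 * ((-1/6 * r3) * q * r * x + (-1/6 * r3) * p * s * x + (1/3 * r3) * p * q * y), r2/2 * ((-1/3 * r3) * r * s * x + (1/6 * r3) * q * r * y + (1/6 * r3) * p * s * y), r2/2 * ((1) * q * r * y + (-1) * p * s * y), 0, r2/2 * ((1/3 * r3) * p * r * x + (-1/3 * r3) * p * p * y), r2/2 * ((1/3 * r3) * r * r * x + (-1/3 * r3) * p * r * y)]"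

definition S4 :: "complex \<Rightarrow> complex \<Rightarrow> complex \<Rightarrow> complex \<Rightarrow> complex \<Rightarrow> complex \<Rightarrow> complex list" where
  "S4 p q r s x y = [0, 0, r2/2 * ((1/3 * r3) * q * s * x + (-1/3 * r3) * q * q * y), r2/2 * ((1/3 * r3) * q * r * x + (-2/3 * r3) * p * s * x + (1/3 * r3) * p * q * y), r2/2 * ((-1/6 * r3) * s * s * x + (1/6 * r3) * q * s * y + (-1/3 * r3) * q * r * x + (1/6 * r3) * p * s * x + (1/6 * r3) * p * q * y), r2/2 * ((1/6 * r3) * r * s * x + (-1/3 * r3) * q * r * y + (1/6 * r3) * p * s * y + (1/6 * r3) * p * r * x + (-1/6 * r3) * p * p * y), r2/2 * ((1/6 * r3) * s * s * x + (-1/6 * r3) * q * s * y + (-1/3 * r3) * q * r * x + (1/6 * r3) * p * s * x + (1/6 * r3) * p * q * y), r2/2 * ((-1/6 * r3) * r * s * x + (1/3 * r3) * q * r * y + (-1/6 * r3) * p * s * y + (1/6 * r3) * p * r * x + (-1/6 * r3) * p * p * y), r2/2 * ((1/6 * r3) * s * s * x + (-1/6 * r3) * q * s * y + (1/3 * r3) * q * r * x + (-1/6 * r3) * p * s * x + (-1/6 * r3) * p * q * y), r2/2 * ((-1/6 * r3) * r * s * x + (1/3 * r3) * q * r * y + (-1/6 * r3) * p * s * y + (-1/6 * r3) * p * r * x + (1/6 * r3) * p * p * y), r2/2 * ((1/6 * r3) * s * s * x + (-1/6 * r3) * q * s * y + (-1/3 * r3) * q * r * x + (1/6 * r3) * p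 * s * x + (1/6 * r3) * p * q * y), r2/2 * ((-1/6 * r3) * r * s * x + (1/3 * r3) * q * r * y + (-1/6 * r3) * p * s * y + (1/6 * r3) * p * r * x + (-1/6 * r3) * p * p * y), 0, 0, r2/2 * ((-1/3 * r3) * r * s * x + (-1/3 * r3) * q * r * y + (2/3 * r3) * p * s * y), r2/2 * ((1/3 * r3) * r * r * x + (-1/3 * r3) * p * r * y)]"

definition S5 :: "complex \<Rightarrow> complex \<Rightarrow> complex \<Rightarrow> complex \<Rightarrow> complex \<Rightarrow> complex \<Rightarrow> complex list" where
  "S5 p q r s x y = [0, 0, r2/2 * ((1/3 * r3) * q * q * r * x + (-1/3 * r3) * p * q * s * x), r2/2 * ((2/3 * r3) * q * r * s * x + (-1/3 * r3) * q * q * r * y + (-2/3 * r3) * p * s * s * x + (1/3 * r3) * p * q * s * y), r2/2 * ((1/6 * r3) * q * r * s * x + (-1/3 * r3) * q * q * r * y + (-1/6 * r3) * p * s * s * x + (1/3 * r3) * p * q * s * y + (-1/6 * r3) * p * q * r * x + (1/6 * r3) * p * p * s * x), r2/2 * ((-1/6 * r3) * q * r * s * y + (-1/3 * r3) * q * r * r * x + (1/6 * r3) * p * s * s * y + (1/3 * r3) * p * r * s * x + (1/6 * r3) * p * q * r * y + (-1/6 * r3) * p * p * s * y), r2/2 * ((-1/6 * r3) * q * r * s * x + (1/3 * r3) * q * q * r * y + (1/6 * r3) * p * s * s * x + (-1/3 * r3) * p * q * s * y + (-1/6 * r3) * p * q * r * x + (1/6 * r3) * p * p * s * x), r2/2 *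 ((1/6 * r3) * q * r * s * y + (-1/3 * r3) * q * r * r * x + (-1/6 * r3) * p * s * s * y + (1/3 * r3) * p * r * s * x + (1/6 * r3) * p * q * r * y + (-1/6 * r3) * p * p * s * y), r2/2 * ((-1/6 * r3) * q * r * s * x + (1/3 * r3) * q * q * r * y + (1/6 * r3) * p * s * s * x + (-1/3 * r3) * p * q * s * y + (1/6 * r3) * p * q * r * x + (-1/6 * r3) * p * p * s * x), r2/2 * ((1/6 * r3) * q * r * s * y + (1/3 * r3) * q * r * r * x + (-1/6 * r3) * p * s * s * y + (-1/3 * r3) * p * r * s * x + (-1/6 * r3) * p * q * r * y + (1/6 * r3) * p * p * s * y), r2/2 * ((-1/6 * r3) * q * r * s * x + (1/3 * r3) * q * q * r * y + (1/6 * r3) * p * s * s * x + (-1/3 * r3) * p * q * s * y + (-1/6 * r3) * p * q * r * x + (1/6 * r3) * p * p * s * x), r2/2 * ((1/6 * r3) * q * r * s * y + (-1/3 * r3) * q * r * r * x + (-1/6 * r3) * p * s * s * y + (1/3 * r3) * p * r * s * x + (1/6 * r3) * p * q * r * y + (-1/6 * r3) * p * p * s * y), 0, 0, r2/2 * ((1/3 * r3) * q * r * r * x + (-1/3 * r3) * p * r * s * x + (-2/3 * r3) * p * q * r * y + (2/3 * r3) * p * p * s * y), r2/2 * ((-1/3 * r3) * q * r * r * y + (1/3 * r3) * p * r * s * y)]"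

definition S6 :: "complex \<Rightarrow> complex \<Rightarrow> complex \<Rightarrow> complex \<Rightarrow> complex \<Rightarrow> complex \<Rightarrow> complex list" where
  "S6 p q r s x y = [0, r2/2 * ((-1) * q * r * s * x + (1) * q * q * r * y + (1) * p * s * s * x + (-1) * p * q * s * y), r2/2 * ((1/3 * r3) * q * q * r * x + (-1/3 * r3) * p * q * s * x), r2/2 * ((-1/3 * r3) * p * q * r * x + (1/3 * r3) * p * p * s * x), r2/2 * ((1/2) * q * r * s * x + (-1/2) * q * q * r * y + (-1/2) * p * s * s * x + (1/2) * p * q * s * y), r2/2 * ((1/2) * q * r * r * x + (-1/2) * p * r * s * x + (-1/2) * p * q * r * y + (1/2) * p * p * s * y), r2/2 * ((1/6 * r3) * q * r * s * x + (1/6 * r3) * q * q * r * y + (-1/6 * r3) * p * s * s * x + (-1/6 * r3) * p * q * s * y), r2/2 * ((-1/6 * r3) * q * r * r * x + (1/6 * r3) * p * r * s * x + (-1/6 * r3) * p * q * r * y + (1/6 * r3) * p * p * s * y), r2/2 * ((1/2) * q * r * s * x + (-1/2) * q * q * r * y + (-1/2) * p * s * s * x + (1/2) * p * q * s * y), r2/2 * ((1/2) * q * r * r * x + (-1/2) * p * r * s * x + (-1/2) * p * q * r * y + (1/2) * p * p * s * y), r2/2 * ((1/6 * r3) * q * r * s * x + (1/6 * r3) * q * q * r * y + (-1/6 * r3) * p * s * s * x + (-1/6 * r3) * p * q * s * y), r2/2 * ((-1/6 * r3) * q * r * r * x + (1/6 * r3) * p * r * s * x + (-1/6 * r3) * p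 * q * r * y + (1/6 * r3) * p * p * s * y), r2/2 * ((-1) * q * r * r * x + (1) * p * r * s * x + (1) * p * q * r * y + (-1) * p * p * s * y), 0, r2/2 * ((1/3 * r3) * q * r * s * y + (-1/3 * r3) * p * s * s * y), r2/2 * ((-1/3 * r3) * q * r * r * y + (1/3 * r3) * p * r * s * y)]"

definition S7 :: "complex \<Rightarrow> complex \<Rightarrow> complex \<Rightarrow> complex \<Rightarrow> complex \<Rightarrow> complex \<Rightarrow> complex list" where
  "S7 p q r s x y = [r2/2 * ((-1) * q * q * r * s * x + (1) * q * q * q * r * y + (1) * p * q * s * s * x + (-1) * p * q * q * s * y), r2/2 * ((-1) * q * r * s * s * x + (1) * q * q * r * s * y + (1) * p * s * s * s * x + (-1) * p * q * s * s * y), 0, r2/2 * ((1/3 * r3) * q * q * r * r * x + (-2/3 * r3) * p * q * r * s * x + (1/3 * r3) * p * p * s * s * x), r2/2 * ((1/2) * q * q * r * r * x + (-1) * p * q * q * r * y + (-1/2) * p * p * s * s * x + (1) * p * p * q * s * y), r2/2 * ((1) * q * r * r * s * x + (-1/2) * q * q * r * r * y + (-1) * p * r * s * s * x + (1/2) * p * p * s * s * y), r2/2 * ((-1/6 * r3) * q * q * r * r * x + (1/3 * r3) * p * q * r * s * x + (-1/6 * r3) * p * p * s * s * x), r2/2 * ((1/6 * r3) * q * q * r * r * y + (-1/3 * r3) * p * q * r * s * y + (1/6 * r3) * p * p * s * s * y), r2/2 * ((1/2) * q * q * r * r * x + (-1) * p * q * q * r * y + (-1/2) * p * p * s * s * x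 + (1) * p * p * q * s * y), r2/2 * ((1) * q * r * r * s * x + (-1/2) * q * q * r * r * y + (-1) * p * r * s * s * x + (1/2) * p * p * s * s * y), r2/2 * ((-1/6 * r3) * q * q * r * r * x + (1/3 * r3) * p * q * r * s * x + (-1/6 * r3) * p * p * s * s * x), r2/2 * ((1/6 * r3) * q * q * r * r * y + (-1/3 * r3) * p * q * r * s * y + (1/6 * r3) * p * p * s * s * y), r2/2 * ((-1) * p * q * r * r * x + (1) * p * p * r * s * x + (1) * p * p * q * r * y + (-1) * p * p * p * s * y), r2/2 * ((-1) * q * r * r * r * x + (1) * p * r * r * s * x + (1) * p * q * r * r * y + (-1) * p * p * r * s * y), r2/2 * ((-1/3 * r3) * q * q * r * r * y + (2/3 * r3) * p * q * r * s * y + (-1/3 * r3) * p * p * s * s * y), 0]"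

definition S8 :: "complex \<Rightarrow> complex \<Rightarrow> complex \<Rightarrow> complex \<Rightarrow> complex \<Rightarrow> complex \<Rightarrow> complex list" where
  "S8 p q r s x y = [r2/2 * ((1) * q * q * r * s * x + (-1) * q * q * q * r * y + (-1) * p * q * s * s * x + (1) * p * q * q * s * y), r2/2 * ((-1) * p * q * r * s * x + (1) * p * q * q * r * y + (1) * p * p * s * s * x + (-1) * p * p * q * s * y), 0, 0, r2/2 * ((1) * q * r * s * s * x + (-1) * q * q * r * s * y + (-1) * p * s * s * s * x + (1) * p * q * s * s * y), r2/2 * ((-1) * q * r * r * s * x + (1) * q * q * r * r * y + (1) * p * r * s * s * x + (-1) * p * q * r * s * y), 0, 0, r2/2 * ((-1) * q * q * r * r * x + (1) * p * q * r * s * x + (1) * p * q * q * r * y + (-1) * p * p * q * s * y), r2/2 * ((1) * p * q * r * r * x + (-1) * p * p * r * s * x + (-1) * p * p * q * r * y + (1) * p * p * p * s * y), 0, 0, r2/2 * ((-1) * q * r * r * s * x + (1) * p * r * s * s * x + (1) * p * q * r * s * y + (-1) * p * p * s * s * y), r2/2 * ((1) * q * r * r * r * x + (-1) * p * r * r * s * x + (-1) * p * q * r * r * y + (1) * p * p * r * s * y), 0, 0]"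

definition S9 :: "complex \<Rightarrow> complex \<Rightarrow> complex \<Rightarrow> complex \<Rightarrow> complex \<Rightarrow> complex \<Rightarrow> complex list" where
  "S9 p q r s x y = [0, r2/2 * ((1) * q * q * r * r * s * x + (-1) * q * q * q * r * r * y + (-2) * p * q * r * s * s * x + (2) * p * q * q * r * s * y + (1) * p * p * s * s * s * x + (-1) * p * p * q * s * s * y), 0, 0, r2/2 * ((-1) * q * q * r * r * s * x + (1) * q * q * q * r * r * y + (2) * p * q * r * s * s * x + (-2) * p * q * q * r * s * y + (-1) * p * p * s * s * s * x + (1) * p * p * q * s * s * y), 0, 0, 0, 0, r2/2 * ((-1) * q * q * r * r * r * x + (2) * p * q * r * r * s * x + (1) * p * q * q * r * r * y + (-1) * p * p * r * s * s * x + (-2) * p * p * q * r * s * y + (1) * p * p * p * s * s * y), 0, 0, r2/2 * ((1) * q * q * r * r * r * x + (-2) * p * q * r * r * s * x + (-1) * p * q * q * r * r * y + (1) * p * p * r * s * s * x + (2) * p * p * q * r * s * y + (-1) * p * p * p * s * s * y), 0, 0, 0]"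

lemma step_in: "mvl W0l [x, y, 0, 0, 0, 0, 0, 0, 0, 0, 0, 0, 0, 0, 0, 0] = S0 p q r s x y"
  unfolding W0l_def S0_def by (simp add: algebra_simps)

lemma step0: "mvl (UL p q r s) (S0 p q r s x y) = S1 p q r s x y"
  unfolding UL_def S0_def S1_def by (simp add: field_simps r3_sq r3_sq')

lemma step1: "mvl W1l (S1 p q r s x y) = S2 p q r s x y"
  unfolding W1l_def S1_def S2_def by (simp add: field_simps r3_sq r3_sq')

lemma step2: "mvl (UL p q r s) (S2 p q r s x y) = S3 p q r s x y"
  unfolding UL_def S2_def S3_def by (simp add: field_simps r3_sq r3_sq')

lemma step3: "mvl W2l (S3 p q r s x y) = S4 p q r s x y"
  unfolding W2l_def S3_def S4_def by (simp add: field_simps r3_sq r3_sq')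

lemma step4: "mvl (UL p q r s) (S4 p q r s x y) = S5 p q r s x y"
  unfolding UL_def S4_def S5_def by (simp add: field_simps r3_sq r3_sq')

lemma step5: "mvl W3l (S5 p q r s x y) = S6 p q r s x y"
  unfolding W3l_def S5_def S6_def by (simp add: field_simps r3_sq r3_sq')

lemma step6: "mvl (UL p q r s) (S6 p q r s x y) = S7 p q r s x y"
  unfolding UL_def S6_def S7_def by (simp add: field_simps r3_sq r3_sq')

lemma step7: "mvl W4l (S7 p q r s x y) = S8 p q r s x y"
  unfolding W4l_def S7_def S8_def by (simp add: field_simps r3_sq r3_sq')

lemma step8: "mvl (UL p q r s) (S8 p q r s x y) = S9 p q r s x y"
  unfolding UL_def S8_def S9_def by (simp add: field_simps r3_sq r3_sq')

lemma step_out: "mvl W5l (S9 p q r s x y) = [(p * s - q * r)^2 * (s * x - q * y), (p * s - q * r)^2 * (p * y - r * x), 0, 0, 0, 0, 0, 0, 0, 0, 0, 0, 0, 0, 0, 0]"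
  unfolding W5l_def S9_def by (simp add: algebra_simps r2_sq r2_sq' power2_eq_square)



definition gram :: "complex list list \<Rightarrow> complex list list" where
  "gram A = map (\<lambda>r1. map (\<lambda>r2. dot r1 (map cnj r2)) A) A"

lemma mk_mat_gram:
  assumes "good_mat A"
  shows "mk_mat A ** cadjoint (mk_mat A) = mk_mat (gram A)"
proof -
  have "(mk_mat A ** cadjoint (mk_mat A)) $ i $ j = mk_mat (gram A) $ i $ j" for i j
  proof -
    have "(mk_mat A ** cadjoint (mk_mat A)) $ i $ j = (\<Sum>k\<in>UNIV. A ! enc i ! enc k * cnj (A ! enc j ! enc k))"
      by (simp add: matrix_matrix_mult_def cadjoint_def mk_mat_def)
    also have "\<dots> = (\<Sum>k<16. A ! enc i ! k * cnj (A ! enc j ! k))"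
      by (rule sum_enc[where f = "\<lambda>k. A ! enc i ! k * cnj (A ! enc j ! k)"])
    also have "\<dots> = (\<Sum>k<16. A ! enc i ! k * (map cnj (A ! enc j)) ! k)"
      using assms enc_lt[of j] by (intro sum.cong) (auto simp: good_mat_def)
    also have "\<dots> = dot (A ! enc i) (map cnj (A ! enc j))"
      using assms enc_lt[of i] enc_lt[of j] by (subst dot_sum[of _ 16]) (auto simp: good_mat_def)
    also have "\<dots> = mk_mat (gram A) $ i $ j"
      using assms enc_lt[of i] enc_lt[of j] by (simp add: mk_mat_def gram_def good_mat_def)
    finally show ?thesis .
  qed
  then show ?thesis by (simp add: vec_eq_iff)
qed

definition Idl :: "complex list list" where
  "Idl = map (\<lambda>i. map (\<lambda>j. if i = j then 1 else 0) [0..<16]) [0..<16]"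

lemma Idl_explicit: "Idl = [[1, 0, 0, 0, 0, 0, 0, 0, 0, 0, 0, 0, 0, 0, 0, 0],
  [0, 1, 0, 0, 0, 0, 0, 0, 0, 0, 0, 0, 0, 0, 0, 0],
  [0, 0, 1, 0, 0, 0, 0, 0, 0, 0, 0, 0, 0, 0, 0, 0],
  [0, 0, 0, 1, 0, 0, 0, 0, 0, 0, 0, 0, 0, 0, 0, 0],
  [0, 0, 0, 0, 1, 0, 0, 0, 0, 0, 0, 0, 0, 0, 0, 0],
  [0, 0, 0, 0, 0, 1, 0, 0, 0, 0, 0, 0, 0, 0, 0, 0],
  [0, 0, 0, 0, 0, 0, 1, 0, 0, 0, 0, 0, 0, 0, 0, 0],
  [0, 0, 0, 0, 0, 0, 0, 1, 0, 0, 0, 0, 0, 0, 0, 0],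
  [0, 0, 0, 0, 0, 0, 0, 0, 1, 0, 0, 0, 0, 0, 0, 0],
  [0, 0, 0, 0, 0, 0, 0, 0, 0, 1, 0, 0, 0, 0, 0, 0],
  [0, 0, 0, 0, 0, 0, 0, 0, 0, 0, 1, 0, 0, 0, 0, 0],
  [0, 0, 0, 0, 0, 0, 0, 0, 0, 0, 0, 1, 0, 0, 0, 0],
  [0, 0, 0, 0, 0, 0, 0, 0, 0, 0, 0, 0, 1, 0, 0, 0],
  [0, 0, 0, 0, 0, 0, 0, 0, 0, 0, 0, 0, 0, 1, 0, 0],
  [0, 0, 0, 0, 0, 0, 0, 0, 0, 0, 0, 0, 0, 0, 1, 0],
  [0, 0, 0, 0, 0, 0, 0, 0, 0, 0, 0, 0, 0, 0, 0, 1]]"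
  unfolding Idl_def by (simp add: upt_rec)

lemma mat1_mk: "(mat 1 :: complex ^ four_idx ^ four_idx) = mk_mat Idl"
proof -
  have "(mat 1 :: complex ^ four_idx ^ four_idx) $ i $ j = mk_mat Idl $ i $ j" for i j
    using enc_lt[of i] enc_lt[of j] inj_eq[OF inj_enc, of i j]
    by (auto simp: mat_def mk_mat_def Idl_def)
  then show ?thesis by (simp add: vec_eq_iff)
qed

lemma cunitary_mk:
  assumes "good_mat A" "gram A = Idl"
  shows "cunitary (mk_mat A)"
proof -
  have 1: "mk_mat A ** cadjoint (mk_mat A) = mat 1"
    using assms by (simp add: mk_mat_gram mat1_mk)
  then have "cadjoint (mk_mat A) ** mk_mat A = mat 1"
    using matrix_left_right_inverse by blast
  with 1 show ?thesis by (simp add: cunitary_def)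
qed

lemma cnj_r3 [simp]: "cnj r3 = r3" by (simp add: r3_def)
lemma cnj_r2 [simp]: "cnj r2 = r2" by (simp add: r2_def)

lemma unit_W0: "cunitary (mk_mat W0l)"
  by (rule cunitary_mk) (simp_all add: good_mat_def W0l_def gram_def Idl_explicit field_simps r2_sq r2_sq')


lemma unit_W5: "cunitary (mk_mat W5l)"
  by (rule cunitary_mk) (simp_all add: good_mat_def W5l_def gram_def Idl_explicit field_simps r2_sq r2_sq')

lemma unit_W1: "cunitary (mk_mat W1l)"
  by (rule cunitary_mk) (simp_all add: good_mat_def W1l_def gram_def Idl_explicit field_simps r3_sq r3_sq')

lemma unit_W2: "cunitary (mk_mat W2l)"
  by (rule cunitary_mk) (simp_all add: good_mat_def W2l_def gram_def Idl_explicit field_simps r3_sq r3_sq')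

lemma unit_W3: "cunitary (mk_mat W3l)"
  by (rule cunitary_mk) (simp_all add: good_mat_def W3l_def gram_def Idl_explicit field_simps r3_sq r3_sq')

lemma unit_W4: "cunitary (mk_mat W4l)"
  by (rule cunitary_mk) (simp_all add: good_mat_def W4l_def gram_def Idl_explicit field_simps r3_sq r3_sq')


lemma sum_2': "sum f (UNIV::2 set) = f 0 + f 1"
  using sum_2[of f] by (simp add: two_eq_zero_2 add.commute)

lemma anc_kron: "anc_id_kron U = mk_mat (UL (U$0$0) (U$0$1) (U$1$0) (U$1$1))"
  unfolding vec_eq_iff forall_four
  by (simp add: anc_id_kron_def kron_def mat_def mk_mat_def UL_def enc_def)

lemma vkron_mk: "vkron ket000 \<phi> = mk_vec [\<phi>$0, \<phi>$1, 0, 0, 0, 0, 0, 0, 0, 0, 0, 0, 0, 0, 0, 0]"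
  unfolding vec_eq_iff forall_four
  by (simp add: vkron_def ket000_def axis_def mk_vec_def enc_def)

lemma inv_apply:
  fixes U :: "complex^2^2"
  assumes "det U = 1"
  shows "matrix_inv U *v \<psi> = (\<chi> i. if i = 0 then U$1$1 * \<psi>$0 - U$0$1 * \<psi>$1 else U$0$0 * \<psi>$1 - U$1$0 * \<psi>$0)"
proof -
  define V :: "complex^2^2" where "V = (\<chi> i j. if i = 0 then (if j = 0 then U$1$1 else - U$0$1) else (if j = 0 then - U$1$0 else U$0$0))"
  have d: "U$0$0 * U$1$1 - U$0$1 * U$1$0 = 1"
    using assms by (simp add: det_2 two_eq_zero_2 algebra_simps)
  have UV: "U ** V = mat 1"
    unfolding vec_eq_iff forall_2'
    using d by (simp add: matrix_matrix_mult_def V_def mat_def sum_2' algebra_simps)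
  have VU: "V ** U = mat 1"
    unfolding vec_eq_iff forall_2'
    using d by (simp add: matrix_matrix_mult_def V_def mat_def sum_2' algebra_simps)
  have "matrix_inv U = V"
    unfolding matrix_inv_def
  proof (rule someI2[where a = V])
    show "U ** V = mat 1 \<and> V ** U = mat 1" using UV VU by simp
  next
    fix A' assume "U ** A' = mat 1 \<and> A' ** U = mat 1"
    then have "A' ** U = mat 1" by simp
    then have "A' = A' ** (U ** V)" using UV by (simp add: matrix_mul_rid)
    also have "\<dots> = (A' ** U) ** V" by (simp add: matrix_mul_assoc)
    also have "\<dots> = V" using \<open>A' ** U = mat 1\<close> by (simp add: matrix_mul_lid)
    finally show "A' = V" .
  qed
  then show ?thesis
    unfolding vec_eq_iff forall_2'
    by (simp add: matrix_vector_mult_def V_def sum_2' algebra_simps)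
qed


lemma lenS0 [simp]: "length (S0 p q r s x y) = 16" by (simp add: S0_def)
lemma lenS1 [simp]: "length (S1 p q r s x y) = 16" by (simp add: S1_def)
lemma lenS2 [simp]: "length (S2 p q r s x y) = 16" by (simp add: S2_def)
lemma lenS3 [simp]: "length (S3 p q r s x y) = 16" by (simp add: S3_def)
lemma lenS4 [simp]: "length (S4 p q r s x y) = 16" by (simp add: S4_def)
lemma lenS5 [simp]: "length (S5 p q r s x y) = 16" by (simp add: S5_def)
lemma lenS6 [simp]: "length (S6 p q r s x y) = 16" by (simp add: S6_def)
lemma lenS7 [simp]: "length (S7 p q r s x y) = 16" by (simp add: S7_def)
lemma lenS8 [simp]: "length (S8 p q r s x y) = 16" by (simp add: S8_def)
lemma lenS9 [simp]: "length (S9 p q r s x y) = 16" by (simp add: S9_def)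
lemma good_W0: "good_mat W0l" by (simp add: good_mat_def W0l_def)
lemma good_W1: "good_mat W1l" by (simp add: good_mat_def W1l_def)
lemma good_W2: "good_mat W2l" by (simp add: good_mat_def W2l_def)
lemma good_W3: "good_mat W3l" by (simp add: good_mat_def W3l_def)
lemma good_W4: "good_mat W4l" by (simp add: good_mat_def W4l_def)
lemma good_W5: "good_mat W5l" by (simp add: good_mat_def W5l_def)
lemma good_UL: "good_mat (UL p q r s)" by (simp add: good_mat_def UL_def)

theorem corollary1:
  shows "\<exists>W0 W1 W2 W3 W4 W5 :: complex ^ four_idx ^ four_idx.
    cunitary W0 \<and> cunitary W1 \<and> cunitary W2 \<and> cunitary W3 \<and> cunitary W4 \<and> cunitary W5 \<and>
    (\<forall>U \<in> SU2. \<forall>\<psi> :: complex ^ 2.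
       (W5 ** anc_id_kron U ** W4 ** anc_id_kron U ** W3 ** anc_id_kron U ** W2 **
        anc_id_kron U ** W1 ** anc_id_kron U ** W0) *v vkron ket000 \<psi>
       = vkron ket000 (matrix_inv U *v \<psi>))"
proof -
  have main: "(mk_mat W5l ** anc_id_kron U ** mk_mat W4l ** anc_id_kron U ** mk_mat W3l ** anc_id_kron U ** mk_mat W2l **
        anc_id_kron U ** mk_mat W1l ** anc_id_kron U ** mk_mat W0l) *v vkron ket000 \<psi>
       = vkron ket000 (matrix_inv U *v \<psi>)" if U: "U \<in> SU2" for U :: "complex^2^2" and \<psi> :: "complex^2"
  proof -
    have det: "det U = 1" using U by (simp add: SU2_def)
    define p q r s where defs: "p = U$0$0" "q = U$0$1" "r = U$1$0" "s = U$1$1"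
    define x y where xy: "x = \<psi>$0" "y = \<psi>$1"
    have d1: "p * s - q * r = 1" using det by (simp add: det_2 two_eq_zero_2 defs algebra_simps)
    have K: "anc_id_kron U = mk_mat (UL p q r s)" by (simp add: anc_kron defs)
    have X: "vkron ket000 \<psi> = mk_vec [x, y, 0, 0, 0, 0, 0, 0, 0, 0, 0, 0, 0, 0, 0, 0]" by (simp add: vkron_mk xy)
    have "(mk_mat W5l ** anc_id_kron U ** mk_mat W4l ** anc_id_kron U ** mk_mat W3l ** anc_id_kron U ** mk_mat W2l **
        anc_id_kron U ** mk_mat W1l ** anc_id_kron U ** mk_mat W0l) *v vkron ket000 \<psi>
       = mk_mat W5l *v (mk_mat (UL p q r s) *v (mk_mat W4l *v (mk_mat (UL p q r s) *v (mk_mat W3l *v (mk_mat (UL p q r s) *v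
         (mk_mat W2l *v (mk_mat (UL p q r s) *v (mk_mat W1l *v (mk_mat (UL p q r s) *v (mk_mat W0l *v mk_vec [x, y, 0, 0, 0, 0, 0, 0, 0, 0, 0, 0, 0, 0, 0, 0]))))))))))"
      by (simp only: matrix_vector_mul_assoc[symmetric] K X)
    also have "\<dots> = mk_vec [(p * s - q * r)^2 * (s * x - q * y), (p * s - q * r)^2 * (p * y - r * x), 0, 0, 0, 0, 0, 0, 0, 0, 0, 0, 0, 0, 0, 0]"
      by (simp add: mk_mat_mult_vec good_W0 good_W1 good_W2 good_W3 good_W4 good_W5 good_UL
          step_in[where p=p and q=q and r=r and s=s] step0 step1 step2 step3 step4 step5 step6 step7 step8 step_out del: mvl_simps)
    also have "\<dots> = vkron ket000 (matrix_inv U *v \<psi>)"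
      using d1 by (simp only: d1 power_one mult_1) (simp add: vkron_mk inv_apply[OF det] defs xy)
    finally show ?thesis .
  qed
  show ?thesis
    apply (rule exI[of _ "mk_mat W0l"], rule exI[of _ "mk_mat W1l"], rule exI[of _ "mk_mat W2l"],
           rule exI[of _ "mk_mat W3l"], rule exI[of _ "mk_mat W4l"], rule exI[of _ "mk_mat W5l"])
    using unit_W0 unit_W1 unit_W2 unit_W3 unit_W4 unit_W5 main by blast
qed


end
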